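(* $$\sum_{k=1}^\infty \frac{1}{2^{k+1}(2k-1)k(2k+1)}=\frac{3}{2\sqrt2}\ln(1+\sqrt2)-\frac12(\ln 2+1),$$ $$\sum_{k=1}^\infty \frac{1}{2^{k+2}(2k-1)k^2(2k+1)}=\frac12+\frac18\ln^2 2-\frac{\pi^2}{48}-\frac{1}{2\sqrt2}\ln(1+\sqrt2),$$ $$\sum_{k=1}^\infty \frac{1}{2^{k+3}(2k-1)k^3(2k+1)}=\frac{3}{2\sqrt2}\ln(1+\sqrt2)+\frac{\pi^2\ln 2}{96}-\frac12(\ln 2+1)-\frac{\ln^3 2}{48}-\frac{7}{64}\zeta(3).$$
   Context: $\zeta$ is the Riemann zeta function. *)

theory Defs
  imports "HOL-Analysis.Analysis"
begin

definition zeta :: "real \<Rightarrow> real" where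
  "zeta s = (\<Sum>n. 1 / (real (Suc n)) powr s)"

end

theory Submission imports Defs "HOL-Real_Asymp.Real_Asymp"
begin

definition c2 :: "nat \<Rightarrow> real" where "c2 n = 1 / (real n)^2"
definition c3 :: "nat \<Rightarrow> real" where "c3 n = 1 / (real n)^3"
definition Li2 :: "real \<Rightarrow> real" where "Li2 x = (\<Sum>n. c2 n * x^n)"
definition Li3 :: "real \<Rightarrow> real" where "Li3 x = (\<Sum>n. c3 n * x^n)"
definition G :: "real \<Rightarrow> real" where "G x = (\<Sum>n. diffs c2 n * x^n)"
definition D3 :: "real \<Rightarrow> real" where "D3 x = (\<Sum>n. diffs c3 n * x^n)"

lemma diffs_c2: "diffs c2 n = 1 / real (Suc n)"
  by (simp add: diffs_def c2_def power2_eq_square)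

lemma diffs_c3: "diffs c3 n = 1 / (real (Suc n))^2"
  by (simp add: diffs_def c3_def power2_eq_square power3_eq_cube)

lemma summable_c2: "summable c2"
proof -
  have eq: "c2 (Suc n) = 1 / real ((n+1)^2)" for n
    unfolding c2_def by (simp only: of_nat_power Suc_eq_plus1)
  have "summable (\<lambda>n. c2 (Suc n))"
    unfolding eq by (rule sums_summable[OF inverse_squares_sums])
  thus ?thesis by (simp only: summable_Suc_iff)
qed

lemma summable_c3: "summable c3"
proof (rule summable_comparison_test'[OF summable_c2])
  fix n :: nat assume "n \<ge> 1"
  hence "real n ^ 2 \<le> real n ^ 3" using power_increasing[of 2 3 "real n"] by simp
  have "norm (c3 n) = 1 / real n ^ 3" by (simp add: c3_def)
  also have "\<dots> \<le> 1 / real n ^ 2"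
    by (rule frac_le) (use \<open>n \<ge> 1\<close> \<open>real n ^ 2 \<le> real n ^ 3\<close> in auto)
  finally show "norm (c3 n) \<le> c2 n" by (simp add: c2_def)
qed

lemma c2_nonneg: "c2 n \<ge> 0" by (simp add: c2_def)
lemma c3_nonneg: "c3 n \<ge> 0" by (simp add: c3_def)

lemma summable_c2_pow: "\<bar>z\<bar> \<le> 1 \<Longrightarrow> summable (\<lambda>n. c2 n * z^n)"
  by (rule summable_comparison_test'[OF summable_c2, of 0])
     (auto simp: abs_mult power_abs c2_nonneg intro!: mult_left_le power_le_one)

lemma summable_c3_pow: "\<bar>z\<bar> \<le> 1 \<Longrightarrow> summable (\<lambda>n. c3 n * z^n)"
  by (rule summable_comparison_test'[OF summable_c3, of 0])
     (auto simp: abs_mult power_abs c3_nonneg intro!: mult_left_le power_le_one)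

lemma Li2_deriv: "\<bar>x\<bar> < 1 \<Longrightarrow> (Li2 has_field_derivative G x) (at x)"
  unfolding Li2_def[abs_def] G_def
  by (rule termdiffs_strong'[of 1]) (auto intro: summable_c2_pow)

lemma Li3_deriv: "\<bar>x\<bar> < 1 \<Longrightarrow> (Li3 has_field_derivative D3 x) (at x)"
  unfolding Li3_def[abs_def] D3_def
  by (rule termdiffs_strong'[of 1]) (auto intro: summable_c3_pow)

lemma Li2_cont: "continuous_on {-1..1} Li2"
proof -
  have "uniform_limit {-1..1} (\<lambda>n x. \<Sum>i<n. c2 i * x^i) (\<lambda>x. suminf (\<lambda>i. c2 i * x^i)) sequentially"
    by (rule Weierstrass_m_test[OF _ summable_c2])
       (auto simp: abs_mult power_abs c2_nonneg intro!: mult_left_le power_le_one)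
  thus ?thesis unfolding Li2_def[abs_def]
    by (rule uniform_limit_theorem[rotated]) (auto intro!: always_eventually continuous_intros)
qed

lemma Li3_cont: "continuous_on {-1..1} Li3"
proof -
  have "uniform_limit {-1..1} (\<lambda>n x. \<Sum>i<n. c3 i * x^i) (\<lambda>x. suminf (\<lambda>i. c3 i * x^i)) sequentially"
    by (rule Weierstrass_m_test[OF _ summable_c3])
       (auto simp: abs_mult power_abs c3_nonneg intro!: mult_left_le power_le_one)
  thus ?thesis unfolding Li3_def[abs_def]
    by (rule uniform_limit_theorem[rotated]) (auto intro!: always_eventually continuous_intros)
qed

lemma G_eq: assumes "\<bar>x\<bar> < 1" shows "x * G x = - ln (1 - x)"
proof -
  have h: "(\<lambda>n. - ((-(-x))^n) / of_nat n) sums ln (1 + (-x))"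
    by (rule ln_series') (use assms in auto)
  have "(\<lambda>n. x^n / of_nat n) sums (- ln (1 - x))"
    using sums_minus[OF h] by simp
  hence "(\<lambda>n. (x^(Suc n)) / of_nat (Suc n)) sums (- ln (1 - x))"
    by (subst sums_Suc_iff) simp
  moreover have "summable (\<lambda>n. diffs c2 n * x^n)"
    by (rule termdiff_converges[of x 1]) (use assms summable_c2_pow in auto)
  hence "(\<lambda>n. x * (diffs c2 n * x^n)) sums (x * G x)"
    unfolding G_def by (intro sums_mult summable_sums)
  moreover have "(\<lambda>n. x * (diffs c2 n * x^n)) = (\<lambda>n. (x^(Suc n)) / of_nat (Suc n))"
    by (auto simp: diffs_c2)
  ultimately show ?thesis using sums_unique2 by metis
qed

lemma D3_eq: assumes "\<bar>x\<bar> < 1" shows "x * D3 x = Li2 x"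
proof -
  have "summable (\<lambda>n. diffs c3 n * x^n)"
    by (rule termdiff_converges[of x 1]) (use assms summable_c3_pow in auto)
  hence "(\<lambda>n. x * (diffs c3 n * x^n)) sums (x * D3 x)"
    unfolding D3_def by (intro sums_mult summable_sums)
  moreover have "(\<lambda>n. x * (diffs c3 n * x^n)) = (\<lambda>n. c2 (Suc n) * x^(Suc n))"
    by (auto simp: diffs_c3 c2_def)
  ultimately have "(\<lambda>n. c2 (Suc n) * x^(Suc n)) sums (x * D3 x)" by simp
  hence "(\<lambda>n. c2 n * x^n) sums (x * D3 x)"
    by (subst (asm) sums_Suc_iff) (simp add: c2_def)
  thus ?thesis unfolding Li2_def by (simp add: sums_iff)
qed


lemma const_interval:
  fixes f :: "real \<Rightarrow> real"
  assumes "a \<le> b" "continuous_on {a..b} f"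
    "\<And>x. a < x \<Longrightarrow> x < b \<Longrightarrow> (f has_field_derivative 0) (at x)"
  shows "f b = f a"
proof (cases "a = b")
  case False
  hence "a < b" using assms(1) by simp
  from MVT[OF this assms(2)] obtain l z where lz: "a < z" "z < b" "DERIV f z :> l" "f b - f a = (b - a) * l"
    using assms(3) real_differentiable_def by blast
  have "l = 0" using DERIV_unique[OF lz(3) assms(3)[OF lz(1,2)]] .
  thus ?thesis using lz(4) by simp
qed simp

lemma Li2_chain [derivative_intros]:
  assumes "\<bar>g x\<bar> < 1" "(g has_real_derivative g') (at x)"
  shows "((\<lambda>x. Li2 (g x)) has_real_derivative G (g x) * g') (at x)"
  using DERIV_chain2[OF Li2_deriv[OF assms(1)] assms(2)] .

lemma Li3_chain [derivative_intros]:
  assumes "\<bar>g x\<bar> < 1" "(g has_real_derivative g') (at x)"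
  shows "((\<lambda>x. Li3 (g x)) has_real_derivative D3 (g x) * g') (at x)"
  using DERIV_chain2[OF Li3_deriv[OF assms(1)] assms(2)] .

lemma powser_at_0: "(\<Sum>n. c n * (0::real)^n) = c 0"
  using powser_zero[of c] by simp

lemma Li2_0: "Li2 0 = 0" unfolding Li2_def powser_at_0 by (simp add: c2_def)
lemma Li3_0: "Li3 0 = 0" unfolding Li3_def powser_at_0 by (simp add: c3_def)

lemma c2_sums: "c2 sums (pi^2/6)"
proof -
  have eq: "c2 (Suc n) = 1 / real ((n+1)^2)" for n
    unfolding c2_def by (simp only: of_nat_power Suc_eq_plus1)
  have "(\<lambda>n. c2 (Suc n)) sums (pi^2/6)"
    unfolding eq by (rule inverse_squares_sums)
  thus ?thesis by (subst (asm) sums_Suc_iff) (simp add: c2_def)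
qed

lemma Li2_1: "Li2 1 = pi^2/6"
  unfolding Li2_def using c2_sums by (simp add: sums_iff)

lemma Li3_1: "Li3 1 = zeta 3"
proof -
  have e1: "(\<lambda>n. c3 (Suc n)) = (\<lambda>n. 1 / (real (Suc n)) powr 3)"
    by (auto simp: c3_def powr_realpow)
  have "(\<lambda>n. c3 n * 1^n) sums Li3 1"
    unfolding Li3_def by (rule summable_sums[OF summable_c3_pow]) simp
  hence s1: "c3 sums Li3 1" by simp
  have c0: "c3 0 = 0" by (simp add: c3_def)
  have "(\<lambda>n. c3 (Suc n)) sums Li3 1"
    using s1 by (subst sums_Suc_iff) (simp add: c0)
  thus ?thesis unfolding zeta_def e1 by (simp add: sums_iff)
qed

lemma Li2_isCont: "\<bar>x\<bar> < 1 \<Longrightarrow> isCont Li2 x"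
  using Li2_deriv DERIV_isCont by blast
lemma Li3_isCont: "\<bar>x\<bar> < 1 \<Longrightarrow> isCont Li3 x"
  using Li3_deriv DERIV_isCont by blast

lemma Li2_left1: "(Li2 \<longlongrightarrow> pi^2/6) (at_left 1)"
proof -
  have eq: "at (1::real) within {0..1} = at_left 1" by (rule at_within_Icc_at_left) simp
  have "continuous_on {0..1} Li2" using Li2_cont by (rule continuous_on_subset) auto
  hence "(Li2 \<longlongrightarrow> Li2 1) (at 1 within {0..1})"
    by (simp add: continuous_on_def)
  thus ?thesis unfolding eq Li2_1 .
qed

lemma Li3_left1: "(Li3 \<longlongrightarrow> zeta 3) (at_left 1)"
proof -
  have eq: "at (1::real) within {0..1} = at_left 1" by (rule at_within_Icc_at_left) simp
  have "continuous_on {0..1} Li3" using Li3_cont by (rule continuous_on_subset) auto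
  hence "(Li3 \<longlongrightarrow> Li3 1) (at 1 within {0..1})"
    by (simp add: continuous_on_def)
  thus ?thesis unfolding eq Li3_1 .
qed

lemma G_eq': "\<bar>x\<bar> < 1 \<Longrightarrow> x \<noteq> 0 \<Longrightarrow> G x = - ln (1 - x) / x"
  using G_eq[of x] by (simp add: field_simps)

lemma D3_eq': "\<bar>x\<bar> < 1 \<Longrightarrow> x \<noteq> 0 \<Longrightarrow> D3 x = Li2 x / x"
  using D3_eq[of x] by (simp add: field_simps)

lemma Li2_refl:
  assumes "0 < x" "x < 1"
  shows "Li2 x + Li2 (1 - x) + ln x * ln (1 - x) = pi^2/6"
proof -
  define h where "h x = Li2 x + Li2 (1 - x) + ln x * ln (1 - x)" for x
  have deriv: "(h has_real_derivative 0) (at t)" if "0 < t" "t < 1" for t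
  proof -
    have g1: "G t = - ln (1 - t) / t" using G_eq'[of t] that by simp
    have g2: "G (1 - t) = - ln t / (1 - t)" using G_eq'[of "1-t"] that by simp
    have "(h has_real_derivative (G t * 1 + G (1 - t) * (- 1) + (1 / t * ln (1 - t) + ln t * (- 1 / (1 - t))))) (at t)"
      unfolding h_def using that
      by (auto intro!: derivative_eq_intros)
    moreover have "G t * 1 + G (1 - t) * (- 1) + (1 / t * ln (1 - t) + ln t * (- 1 / (1 - t))) = 0"
      unfolding g1 g2 using that by (simp add: field_simps)
    ultimately show ?thesis by simp
  qed
  have const: "h b = h x" if "x \<le> b" "b < 1" for b
  proof (rule const_interval[OF that(1)])
    show "continuous_on {x..b} h"
      unfolding h_def using assms that
      by (intro continuous_intros continuous_on_compose2[OF Li2_cont]) auto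
  qed (use assms that deriv in auto)
  have ev: "eventually (\<lambda>b. h b = h x) (at_left 1)"
    using eventually_at_left_real[OF assms(2)] by (rule eventually_mono) (auto intro: const)
  have l1: "(h \<longlongrightarrow> pi^2/6 + 0 + 0) (at_left 1)"
    unfolding h_def
  proof (intro tendsto_intros Li2_left1)
    have "((\<lambda>b. Li2 (1 - b)) \<longlongrightarrow> Li2 (1 - 1)) (at_left 1)"
      by (intro tendsto_compose[OF isContD[OF Li2_isCont]] tendsto_intros) auto
    thus "((\<lambda>b. Li2 (1 - b)) \<longlongrightarrow> 0) (at_left 1)" by (simp add: Li2_0)
    show "((\<lambda>x. ln x * ln (1 - x)) \<longlongrightarrow> 0) (at_left (1::real))" by real_asymp
  qed
  have l2: "(h \<longlongrightarrow> h x) (at_left 1)"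
    using tendsto_eventually[OF ev] .
  have "h x = pi^2/6 + 0 + 0" by (rule tendsto_unique[OF trivial_limit_at_left_real l2 l1])
  thus ?thesis unfolding h_def by simp
qed


lemma inv_bounds:
  assumes "1/2 \<le> t" "t \<le> (1::real)"
  shows "-1 \<le> 1 - 1/t" "1 - 1/t \<le> 0"
proof -
  have "t > 0" using assms by simp
  have "1/t \<le> 2" using assms \<open>t > 0\<close> by (simp add: field_simps)
  moreover have "1 \<le> 1/t" using assms \<open>t > 0\<close> by (simp add: field_simps)
  ultimately show "-1 \<le> 1 - 1/t" "1 - 1/t \<le> 0" by simp_all
qed

lemma inv_bounds':
  assumes "1/2 < t" "t \<le> (1::real)"
  shows "\<bar>1 - 1/t\<bar> < 1"
proof -
  have "t > 0" using assms by simp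
  have "1/t < 2" using assms \<open>t > 0\<close> by (simp add: field_simps)
  moreover have "1 \<le> 1/t" using assms \<open>t > 0\<close> by (simp add: field_simps)
  ultimately show ?thesis by simp
qed

lemma Li2_landen:
  assumes "1/2 < x" "x \<le> 1"
  shows "Li2 (1 - 1/x) + Li2 (1 - x) + ln x ^ 2 / 2 = 0"
proof -
  define P where "P t = Li2 (1 - 1/t) + Li2 (1 - t) + ln t ^ 2 / 2" for t
  have deriv: "(P has_real_derivative 0) (at t)" if "1/2 < t" "t < 1" for t
  proof -
    have t0: "t > 0" using that by simp
    have a1: "\<bar>1 - 1/t\<bar> < 1" using inv_bounds'[of t] that by simp
    have a2: "\<bar>1 - t\<bar> < 1" using that by simp
    have ne: "1 - 1/t \<noteq> 0" using that t0 by (simp add: field_simps)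
    have g1: "G (1 - 1/t) = ln t / (1 - 1/t)"
      using G_eq'[OF a1 ne] t0 by (simp add: ln_div)
    have g2: "G (1 - t) = - ln t / (1 - t)" using G_eq'[OF a2] that by simp
    have "(P has_real_derivative (G (1 - 1/t) * (1 / t^2) + G (1 - t) * (- 1) + ln t * (1 / t))) (at t)"
      unfolding P_def using that a1 a2
      by (auto intro!: derivative_eq_intros simp: power2_eq_square field_simps)
    moreover have "G (1 - 1/t) * (1 / t^2) + G (1 - t) * (- 1) + ln t * (1 / t) = 0"
    proof -
      have n1: "t - 1 \<noteq> 0" "1 - t \<noteq> 0" using that by auto
      have e: "1 / (1 - 1/t) * (1 / t^2) = 1 / (t * (t - 1))"
        using n1 t0 by (simp add: field_simps power2_eq_square)
      have p1: "1 / (t * (t - 1)) * (t * (t - 1)) = 1" using n1 t0 by simp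
      have p2: "1 / (1 - t) * (t * (t - 1)) = - t" using n1 by (simp add: field_simps)
      have p3: "1 / t * (t * (t - 1)) = t - 1" using t0 by simp
      have "(1 / (t * (t - 1)) + 1 / (1 - t) + 1 / t) * (t * (t - 1)) = 0"
        by (simp only: distrib_right p1 p2 p3)
      hence br: "1 / (t * (t - 1)) + 1 / (1 - t) + 1 / t = 0"
        using n1 t0 by simp
      have "G (1 - 1/t) * (1 / t^2) + G (1 - t) * (- 1) + ln t * (1 / t)
            = ln t * (1 / (1 - 1/t) * (1 / t^2) + 1 / (1 - t) + 1 / t)"
        unfolding g1 g2 by (simp add: algebra_simps)
      thus ?thesis unfolding e br by simp
    qed
    ultimately show ?thesis by simp
  qed
  have "P 1 = P x"
  proof (rule const_interval[OF assms(2)])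
    have "continuous_on {x..1} (\<lambda>t. Li2 (1 - 1/t))"
      by (rule continuous_on_compose2[OF Li2_cont])
         (use assms inv_bounds in \<open>auto intro!: continuous_intros\<close>)
    moreover have "continuous_on {x..1} (\<lambda>t. Li2 (1 - t))"
      by (rule continuous_on_compose2[OF Li2_cont])
         (use assms in \<open>auto intro!: continuous_intros\<close>)
    moreover have "continuous_on {x..1} (\<lambda>t. ln t ^ 2 / 2)"
      using assms by (auto intro!: continuous_intros)
    ultimately show "continuous_on {x..1} P"
      unfolding P_def by (intro continuous_on_add)
  qed (use assms deriv in auto)
  moreover have "P 1 = 0" unfolding P_def by (simp add: Li2_0)
  ultimately show ?thesis unfolding P_def by simp
qed


lemma landen3_alg:
  fixes t a b L p :: real
  assumes "0 < t" "t < 1"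
  shows "(p/6 - L - a*b)/t - L/(1-t) + (-L - a^2/2)/(1 - 1/t) * (1/t^2)
          - 3 * a^2 / (6*t) - p/(6*t) + (2*a/t*b - a^2/(1-t))/2 = 0"
proof -
  have n: "t \<noteq> 0" "1 - t \<noteq> 0" "t - 1 \<noteq> 0" using assms by auto
  have f1: "1/(1 - 1/t) * (1/t^2) = 1/(t * (t - 1))" using n by (simp add: field_simps power2_eq_square)
  have f2: "1/(t * (t - 1)) = - (1/t + 1/(1-t))" using n by (simp add: field_simps)
  have "(-L - a^2/2)/(1 - 1/t) * (1/t^2) = (-L - a^2/2) * (1/(1 - 1/t) * (1/t^2))" by simp
  also have "\<dots> = (-L - a^2/2) * (- (1/t + 1/(1-t)))" unfolding f1 f2 ..
  also have "\<dots> = (L + a^2/2) * (1/t + 1/(1-t))"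
  proof -
    have mm: "-L - a^2/2 = -(L + a^2/2)" by simp
    show ?thesis by (simp only: mm minus_mult_minus)
  qed
  finally have e: "(-L - a^2/2)/(1 - 1/t) * (1/t^2) = (L + a^2/2) * (1/t + 1/(1-t))" .
  have h0: "2 - t*2 = 2*(1-t)" by simp
  have h: "2 * a^2 / (2 - t*2) = a^2/(1-t)" by (simp only: h0 mult_divide_mult_cancel_left_if) simp
  have h1: "2 - 2*t = 2*(1-t)" by simp
  have h': "2 * a^2 / (2 - 2*t) = a^2/(1-t)" by (simp only: h1 mult_divide_mult_cancel_left_if) simp
  define u where "u = 1/t"
  define v where "v = 1/(1-t)"
  have r1: "x / t = x * u" for x unfolding u_def by simp
  have r2: "x / (1-t) = x * v" for x unfolding v_def by simp
  have r3: "x / (6*t) = x * u / 6" for x unfolding u_def by simp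
  show ?thesis unfolding e by (simp only: r3 r1 r2) (simp add: field_simps)
qed

lemma Li3_m1: "Li3 (-1) = - 3/4 * zeta 3"
proof -
  have s1: "(\<lambda>n. c3 n * 1^n) sums Li3 1" unfolding Li3_def by (rule summable_sums[OF summable_c3_pow]) simp
  have s2: "(\<lambda>n. c3 n * (-1)^n) sums Li3 (-1)" unfolding Li3_def by (rule summable_sums[OF summable_c3_pow]) simp
  have s3: "(\<lambda>n. c3 n * 1^n + c3 n * (-1)^n) sums (Li3 1 + Li3 (-1))" by (rule sums_add[OF s1 s2])
  have s4: "(\<lambda>n. if even n then (\<lambda>m. c3 m / 4) (n div 2) else (\<lambda>m. 0) ((n - 1) div 2)) sums (0 + Li3 1 / 4)"
    by (rule sums_if) (use s1 in \<open>auto intro: sums_divide\<close>)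
  have eq: "(\<lambda>n. c3 n * 1^n + c3 n * (-1)^n) = (\<lambda>n. if even n then (\<lambda>m. c3 m / 4) (n div 2) else (\<lambda>m. 0) ((n - 1) div 2))"
  proof
    fix n :: nat
    show "c3 n * 1^n + c3 n * (-1)^n = (if even n then (\<lambda>m. c3 m / 4) (n div 2) else (\<lambda>m. 0) ((n - 1) div 2))"
    proof (cases "even n")
      case True
      then obtain m where m: "n = 2 * m" by blast
      show ?thesis using True unfolding m by (simp add: c3_def power3_eq_cube)
    next
      case False
      thus ?thesis by simp
    qed
  qed
  have "Li3 1 + Li3 (-1) = Li3 1 / 4" using sums_unique2[OF s3, unfolded eq, OF s4] by simp
  thus ?thesis using Li3_1 by simp
qed

lemma Li3_landen:
  shows "2 * Li3 (1/2) + Li3 (-1) + ln 2 ^ 3 / 6 + pi^2 / 6 * ln 2 - ln 2 ^ 3 / 2 = zeta 3"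
proof -
  define T where "T t = Li3 t + Li3 (1 - t) + Li3 (1 - 1/t) - ln t ^ 3 / 6 - pi^2/6 * ln t + ln t ^ 2 * ln (1 - t) / 2" for t
  have deriv: "(T has_real_derivative 0) (at t)" if "1/2 < t" "t < 1" for t
  proof -
    have t0: "t > 0" using that by simp
    have a1: "\<bar>1 - 1/t\<bar> < 1" using inv_bounds'[of t] that by simp
    have a2: "\<bar>1 - t\<bar> < 1" using that by simp
    have a3: "\<bar>t\<bar> < 1" using that by simp
    have ne: "1 - 1/t \<noteq> 0" using that t0 by (simp add: field_simps)
    have d1: "D3 t = (pi^2/6 - Li2 (1 - t) - ln t * ln (1 - t)) / t"
      using D3_eq'[OF a3] Li2_refl[of t] that by simp
    have d2: "D3 (1 - t) = Li2 (1 - t) / (1 - t)" using D3_eq'[OF a2] that by simp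
    have d3: "D3 (1 - 1/t) = (- Li2 (1 - t) - ln t ^ 2 / 2) / (1 - 1/t)"
      using D3_eq'[OF a1 ne] Li2_landen[of t] that by simp
    have "(T has_real_derivative (D3 t * 1 + D3 (1 - t) * (- 1) + D3 (1 - 1/t) * (1 / t^2)
           - 3 * ln t ^ 2 / (6 * t) - pi^2 / (6 * t) + (2 * ln t / t * ln (1 - t) - ln t ^ 2 / (1 - t)) / 2)) (at t)"
      unfolding T_def using that a1 a2 a3
      by (auto intro!: derivative_eq_intros simp: power2_eq_square field_simps)
    moreover have "D3 t * 1 + D3 (1 - t) * (- 1) + D3 (1 - 1/t) * (1 / t^2)
           - 3 * ln t ^ 2 / (6 * t) - pi^2 / (6 * t) + (2 * ln t / t * ln (1 - t) - ln t ^ 2 / (1 - t)) / 2 = 0"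
      unfolding d1 d2 d3 using landen3_alg[of t "pi^2" "Li2 (1 - t)" "ln t" "ln (1 - t)"] that by simp
    ultimately show ?thesis by simp
  qed
  have const: "T b = T (1/2)" if "1/2 \<le> b" "b < 1" for b
  proof (rule const_interval[OF that(1)])
    have "continuous_on {1/2..b} (\<lambda>t. Li3 (1 - 1/t))"
      by (rule continuous_on_compose2[OF Li3_cont])
         (use that inv_bounds in \<open>auto intro!: continuous_intros\<close>)
    moreover have "continuous_on {1/2..b} (\<lambda>t. Li3 (1 - t))"
      by (rule continuous_on_compose2[OF Li3_cont])
         (use that in \<open>auto intro!: continuous_intros\<close>)
    moreover have "continuous_on {1/2..b} (\<lambda>t. Li3 t)"
      by (rule continuous_on_subset[OF Li3_cont]) (use that in auto)
    moreover have "continuous_on {1/2..b} (\<lambda>t. ln t ^ 3 / 6)"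
      using that by (auto intro!: continuous_intros)
    moreover have "continuous_on {1/2..b} (\<lambda>t. pi^2/6 * ln t)"
      using that by (auto intro!: continuous_intros)
    moreover have "continuous_on {1/2..b} (\<lambda>t. ln t ^ 2 * ln (1 - t) / 2)"
      using that by (auto intro!: continuous_intros)
    ultimately show "continuous_on {1/2..b} T"
      unfolding T_def by (intro continuous_on_add continuous_on_diff)
  qed (use that deriv in auto)
  have ev: "eventually (\<lambda>b. T b = T (1/2)) (at_left 1)"
    using eventually_at_left_real[of "1/2" "1::real"] by (rule eventually_mono) (auto intro: const)
  have l2: "(T \<longlongrightarrow> T (1/2)) (at_left 1)"
    using tendsto_eventually[OF ev] .
  have l1: "(T \<longlongrightarrow> zeta 3 + 0 + 0 - 0 - pi^2/6 * 0 + 0) (at_left 1)"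
    unfolding T_def
  proof (intro tendsto_intros Li3_left1)
    have "((\<lambda>b. Li3 (1 - b)) \<longlongrightarrow> Li3 (1 - 1)) (at_left 1)"
      by (intro tendsto_compose[OF isContD[OF Li3_isCont]] tendsto_intros) auto
    thus "((\<lambda>b. Li3 (1 - b)) \<longlongrightarrow> 0) (at_left 1)" by (simp add: Li3_0)
    have "((\<lambda>b. Li3 (1 - 1/b)) \<longlongrightarrow> Li3 (1 - 1/1)) (at_left 1)"
      by (intro tendsto_compose[OF isContD[OF Li3_isCont]] tendsto_intros) auto
    thus "((\<lambda>b. Li3 (1 - 1/b)) \<longlongrightarrow> 0) (at_left 1)" by (simp add: Li3_0)
    show "((\<lambda>x. ln x ^ 3 / 6) \<longlongrightarrow> 0) (at_left (1::real))" by real_asymp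
    show "((\<lambda>x. ln x) \<longlongrightarrow> 0) (at_left (1::real))" by real_asymp
    show "((\<lambda>x. ln x ^ 2 * ln (1 - x) / 2) \<longlongrightarrow> 0) (at_left (1::real))" by real_asymp
  qed
  have "T (1/2) = zeta 3 + 0 + 0 - 0 - pi^2/6 * 0 + 0"
    by (rule tendsto_unique[OF trivial_limit_at_left_real l2 l1])
  moreover have "T (1/2) = 2 * Li3 (1/2) + Li3 (-1) + ln 2 ^ 3 / 6 + pi^2 / 6 * ln 2 - ln 2 ^ 3 / 2"
    unfolding T_def by (simp add: ln_div power3_eq_cube power2_eq_square)
  ultimately show ?thesis by simp
qed


lemma Li2_half: "Li2 (1/2) = pi^2/12 - ln 2 ^ 2 / 2"
  using Li2_refl[of "1/2"] by (simp add: ln_div power2_eq_square)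

lemma Li3_half: "Li3 (1/2) = 7/8 * zeta 3 - pi^2 * ln 2 / 12 + ln 2 ^ 3 / 6"
  using Li3_landen Li3_m1 by (simp add: algebra_simps)

lemma ln_sums: "\<bar>x\<bar> < 1 \<Longrightarrow> (\<lambda>n. x^(Suc n) / (real n + 1)) sums (- ln (1 - x))"
proof -
  assume assms: "\<bar>x\<bar> < 1"
  have h: "(\<lambda>n. - ((-(-x))^n) / of_nat n) sums ln (1 + (-x))"
    by (rule ln_series') (use assms in auto)
  have "(\<lambda>n. x^n / of_nat n) sums (- ln (1 - x))"
    using sums_minus[OF h] by simp
  hence "(\<lambda>n. (x^(Suc n)) / of_nat (Suc n)) sums (- ln (1 - x))"
    by (subst sums_Suc_iff) simp
  thus ?thesis by (simp add: add.commute)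
qed

lemma SA: "(\<lambda>n. (1/2::real)^(Suc n) / (real n + 1)) sums ln 2"
  using ln_sums[of "1/2"] by (simp add: ln_div)

lemma SB: "(\<lambda>n. (1/2::real)^(Suc n) / (real n + 1)^2) sums Li2 (1/2)"
proof -
  have "(\<lambda>n. c2 n * (1/2)^n) sums Li2 (1/2)"
    unfolding Li2_def by (rule summable_sums[OF summable_c2_pow]) simp
  hence "(\<lambda>n. c2 (Suc n) * (1/2)^(Suc n)) sums Li2 (1/2)"
    by (subst sums_Suc_iff) (simp add: c2_def)
  moreover have "(\<lambda>n. c2 (Suc n) * (1/2::real)^(Suc n)) = (\<lambda>n. (1/2::real)^(Suc n) / (real n + 1)^2)"
    by (auto simp: c2_def add.commute)
  ultimately show ?thesis by simp
qed

lemma SC: "(\<lambda>n. (1/2::real)^(Suc n) / (real n + 1)^3) sums Li3 (1/2)"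
proof -
  have "(\<lambda>n. c3 n * (1/2)^n) sums Li3 (1/2)"
    unfolding Li3_def by (rule summable_sums[OF summable_c3_pow]) simp
  hence "(\<lambda>n. c3 (Suc n) * (1/2)^(Suc n)) sums Li3 (1/2)"
    by (subst sums_Suc_iff) (simp add: c3_def)
  moreover have "(\<lambda>n. c3 (Suc n) * (1/2::real)^(Suc n)) = (\<lambda>n. (1/2::real)^(Suc n) / (real n + 1)^3)"
    by (auto simp: c3_def add.commute)
  ultimately show ?thesis by simp
qed

lemma artanh_sums:
  "(\<lambda>n. (1 / sqrt 2) ^ (2*n+1) / real (2*n+1)) sums ln (1 + sqrt 2)"
proof -
  define X where "X = (1 + sqrt 2)^2"
  have s2: "sqrt 2 * sqrt 2 = (2::real)" by simp
  have X: "X = 3 + 2 * sqrt 2" unfolding X_def by (simp add: power2_eq_square algebra_simps)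
  have Xpos: "X > 0" unfolding X by (simp add: add_pos_nonneg)
  have y: "(X - 1) / (X + 1) = 1 / sqrt 2"
  proof -
    have "X + 1 > 0" using Xpos by simp
    moreover have "(X - 1) * sqrt 2 = X + 1" unfolding X by (simp add: algebra_simps s2)
    ultimately show ?thesis by (simp add: field_simps)
  qed
  have lnX: "ln X = 2 * ln (1 + sqrt 2)"
    unfolding X_def by (simp add: ln_realpow add_pos_nonneg)
  have "(\<lambda>n. 2 * ((X - 1) / (X + 1)) ^ (2*n+1) / of_nat (2*n+1)) sums ln X"
    by (rule ln_series_quadratic[OF Xpos])
  hence "(\<lambda>n. 2 * ((X - 1) / (X + 1)) ^ (2*n+1) / of_nat (2*n+1) / 2) sums (ln X / 2)"
    by (rule sums_divide)
  thus ?thesis unfolding y lnX by simp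
qed

lemma SD: "(\<lambda>n. (1/2::real)^(Suc n) / (2 * real n + 1)) sums (ln (1 + sqrt 2) / sqrt 2)"
proof -
  have "(\<lambda>n. (1 / sqrt 2) * ((1 / sqrt 2) ^ (2*n+1) / real (2*n+1))) sums ((1 / sqrt 2) * ln (1 + sqrt 2))"
    by (rule sums_mult[OF artanh_sums])
  moreover have "(\<lambda>n. (1 / sqrt 2) * ((1 / sqrt 2) ^ (2*n+1) / real (2*n+1))) = (\<lambda>n. (1/2::real)^(Suc n) / (2 * real n + 1))"
  proof
    fix n
    have "(1 / sqrt 2) * (1 / sqrt 2) ^ (2*n+1) = (1 / sqrt 2) ^ (2 * Suc n)" by simp
    also have "\<dots> = ((1 / sqrt 2)^2) ^ Suc n" by (simp only: power_mult)
    also have "\<dots> = (1/2) ^ Suc n" by (simp add: power_divide)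
    finally have "(1 / sqrt 2) * (1 / sqrt 2) ^ (2*n+1) = (1/2::real) ^ Suc n" .
    thus "(1 / sqrt 2) * ((1 / sqrt 2) ^ (2*n+1) / real (2*n+1)) = (1/2::real)^(Suc n) / (2 * real n + 1)"
      by (simp add: mult.assoc[symmetric])
  qed
  ultimately show ?thesis by simp
qed

lemma SE: "(\<lambda>n. (1/2::real)^(Suc n) / (2 * real n + 3)) sums (sqrt 2 * ln (1 + sqrt 2) - 1)"
proof -
  define a where "a n = (1 / sqrt 2) ^ (2*n+1) / real (2*n+1)" for n
  have "a sums ln (1 + sqrt 2)" unfolding a_def[abs_def] by (rule artanh_sums)
  hence "(\<lambda>n. a (Suc n)) sums (ln (1 + sqrt 2) - a 0)"
    using sums_Suc_iff[of a "ln (1 + sqrt 2) - a 0"] by simp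
  hence "(\<lambda>n. sqrt 2 * a (Suc n)) sums (sqrt 2 * (ln (1 + sqrt 2) - a 0))"
    by (rule sums_mult)
  moreover have "sqrt 2 * (ln (1 + sqrt 2) - a 0) = sqrt 2 * ln (1 + sqrt 2) - 1"
    unfolding a_def by (simp add: algebra_simps)
  moreover have "(\<lambda>n. sqrt 2 * a (Suc n)) = (\<lambda>n. (1/2::real)^(Suc n) / (2 * real n + 3))"
  proof
    fix n
    have "sqrt 2 * (1 / sqrt 2) ^ (2 * Suc n + 1) = (1 / sqrt 2) ^ (2 * Suc n)"
      by (simp add: field_simps)
    also have "\<dots> = ((1 / sqrt 2)^2) ^ Suc n" by (simp only: power_mult)
    also have "\<dots> = (1/2) ^ Suc n" by (simp add: power_divide)
    finally have e: "sqrt 2 * (1 / sqrt 2) ^ (2 * Suc n + 1) = (1/2::real) ^ Suc n" .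
    have r: "real (2 * Suc n + 1) = 2 * real n + 3" by simp
    show "sqrt 2 * a (Suc n) = (1/2::real)^(Suc n) / (2 * real n + 3)"
      unfolding a_def r using e by (simp add: mult.assoc[symmetric])
  qed
  ultimately show ?thesis by simp
qed


lemma finish_has_sum:
  fixes f :: "nat \<Rightarrow> real"
  assumes "(\<lambda>n. f (Suc n)) sums S" "f 0 = 0" "\<And>n. f n \<ge> 0"
  shows "(f has_sum S) {1..}"
proof -
  have "f sums S" using assms(1,2) by (subst (asm) sums_Suc_iff) simp
  hence "(f has_sum S) UNIV" using assms(3) by (rule sums_nonneg_imp_has_sum)
  moreover have "(f has_sum S) UNIV \<longleftrightarrow> (f has_sum S) {1..}"
    by (rule has_sum_cong_neutral) (use assms(2) in \<open>auto simp: not_less_eq_eq\<close>)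
  ultimately show ?thesis by simp
qed

lemma pf1:
  fixes u z w :: real
  assumes "u \<noteq> 0" "z \<noteq> 0" "w \<noteq> 0" "u = 2*w - 1" "z = 2*w + 1"
  shows "1/(u*w*z) = 1/u + 1/z - 1/w"
proof -
  have "1/u + 1/z - 1/w = (u*w + z*w - u*z)/(u*z*w)" using assms(1-3) by (simp add: field_simps)
  also have "u*w + z*w - u*z = 1" unfolding assms(4,5) by (simp add: algebra_simps)
  finally show ?thesis by (simp add: mult_ac)
qed

lemma pf2:
  fixes u z w :: real
  assumes "u \<noteq> 0" "z \<noteq> 0" "w \<noteq> 0" "u = 2*w - 1" "z = 2*w + 1"
  shows "1/(u*w^2*z) = 2/u - 2/z - 1/w^2"
proof -
  have "2/u - 2/z - 1/w^2 = (2*z*w^2 - 2*u*w^2 - u*z)/(u*z*w^2)" using assms(1-3) by (simp add: field_simps)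
  also have "2*z*w^2 - 2*u*w^2 - u*z = 1" unfolding assms(4,5) by (simp add: algebra_simps power2_eq_square)
  finally show ?thesis by (simp add: mult_ac)
qed

lemma pf3:
  fixes u z w :: real
  assumes "u \<noteq> 0" "z \<noteq> 0" "w \<noteq> 0" "u = 2*w - 1" "z = 2*w + 1"
  shows "1/(u*w^3*z) = 4/u + 4/z - 4/w - 1/w^3"
proof -
  have "4 * (1/(u*w*z)) - 1/w^3 = (4*w^2 - u*z)/(u*z*w^3)" using assms(1-3) by (simp add: field_simps power3_eq_cube power2_eq_square)
  also have "4*w^2 - u*z = 1" unfolding assms(4,5) by (simp add: algebra_simps power2_eq_square)
  finally have "1/(u*w^3*z) = 4 * (1/(u*w*z)) - 1/w^3" by (simp add: mult_ac)
  also have "\<dots> = 4/u + 4/z - 4/w - 1/w^3" unfolding pf1[OF assms] by (simp add: algebra_simps)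
  finally show ?thesis .
qed


lemma term1:
  fixes u w z X P q :: real
  assumes "u \<noteq> 0" "z \<noteq> 0" "w \<noteq> 0" "u = 2*w - 1" "z = 2*w + 1" "X = 2*P" "P \<noteq> 0" "q = 1/P"
  shows "1/(X*u*w*z) = 1/2 * (q/u + q/z - q/w)"
proof -
  have "1/(X*u*w*z) = 1/(2*P) * (1/(u*w*z))" using assms(1-3,6,7) by (simp add: field_simps)
  also have "\<dots> = 1/(2*P) * (1/u + 1/z - 1/w)" unfolding pf1[OF assms(1-5)] ..
  also have "\<dots> = 1/2 * (q/u + q/z - q/w)" unfolding assms(8) using assms(1-3,7) by (simp add: field_simps)
  finally show ?thesis .
qed

lemma term2:
  fixes u w z X P q :: real
  assumes "u \<noteq> 0" "z \<noteq> 0" "w \<noteq> 0" "u = 2*w - 1" "z = 2*w + 1" "X = 4*P" "P \<noteq> 0" "q = 1/P"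
  shows "1/(X*u*w^2*z) = 1/4 * (2*(q/u) - 2*(q/z) - q/w^2)"
proof -
  have "1/(X*u*w^2*z) = 1/(4*P) * (1/(u*w^2*z))" using assms(1-3,6,7) by (simp add: field_simps)
  also have "\<dots> = 1/(4*P) * (2/u - 2/z - 1/w^2)" unfolding pf2[OF assms(1-5)] ..
  also have "\<dots> = 1/4 * (2*(q/u) - 2*(q/z) - q/w^2)" unfolding assms(8) using assms(1-3,7) by (simp add: field_simps)
  finally show ?thesis .
qed

lemma term3:
  fixes u w z X P q :: real
  assumes "u \<noteq> 0" "z \<noteq> 0" "w \<noteq> 0" "u = 2*w - 1" "z = 2*w + 1" "X = 8*P" "P \<noteq> 0" "q = 1/P"
  shows "1/(X*u*w^3*z) = 1/8 * (4*(q/u) + 4*(q/z) - 4*(q/w) - q/w^3)"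
proof -
  have "1/(X*u*w^3*z) = 1/(8*P) * (1/(u*w^3*z))" using assms(1-3,6,7) by (simp add: field_simps)
  also have "\<dots> = 1/(8*P) * (4/u + 4/z - 4/w - 1/w^3)" unfolding pf3[OF assms(1-5)] ..
  also have "\<dots> = 1/8 * (4*(q/u) + 4*(q/z) - 4*(q/w) - q/w^3)" unfolding assms(8) using assms(1-3,7) by (simp add: field_simps)
  finally show ?thesis .
qed

theorem corollary4:
  shows "((\<lambda>k::nat. 1 / (2 ^ (k + 1) * (2 * real k - 1) * real k * (2 * real k + 1)))
            has_sum (3 / (2 * sqrt 2) * ln (1 + sqrt 2) - 1 / 2 * (ln 2 + 1))) {1..} \<and>
         ((\<lambda>k::nat. 1 / (2 ^ (k + 2) * (2 * real k - 1) * real k ^ 2 * (2 * real k + 1)))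
            has_sum (1 / 2 + 1 / 8 * (ln 2) ^ 2 - pi ^ 2 / 48 - 1 / (2 * sqrt 2) * ln (1 + sqrt 2))) {1..} \<and>
         ((\<lambda>k::nat. 1 / (2 ^ (k + 3) * (2 * real k - 1) * real k ^ 3 * (2 * real k + 1)))
            has_sum (3 / (2 * sqrt 2) * ln (1 + sqrt 2) + pi ^ 2 * ln 2 / 96 - 1 / 2 * (ln 2 + 1)
                     - (ln 2) ^ 3 / 48 - 7 / 64 * zeta 3)) {1..}"
proof -
  define L where "L = ln (1 + sqrt 2)"
  define A where "A n = (1/2::real)^(Suc n) / (real n + 1)" for n
  define B where "B n = (1/2::real)^(Suc n) / (real n + 1)^2" for n
  define C where "C n = (1/2::real)^(Suc n) / (real n + 1)^3" for n
  define D where "D n = (1/2::real)^(Suc n) / (2 * real n + 1)" for n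
  define E where "E n = (1/2::real)^(Suc n) / (2 * real n + 3)" for n
  have sA: "A sums ln 2" unfolding A_def[abs_def] by (rule SA)
  have sB: "B sums Li2 (1/2)" unfolding B_def[abs_def] by (rule SB)
  have sC: "C sums Li3 (1/2)" unfolding C_def[abs_def] by (rule SC)
  have sD: "D sums (L / sqrt 2)" unfolding D_def[abs_def] L_def by (rule SD)
  have sE: "E sums (sqrt 2 * L - 1)" unfolding E_def[abs_def] L_def by (rule SE)
  have facts: "2 * real (Suc n) - 1 \<noteq> 0" "2 * real (Suc n) + 1 \<noteq> 0" "real (Suc n) \<noteq> 0"
    "(2::real) ^ Suc n \<noteq> 0" "(1/2::real)^(Suc n) = 1 / 2 ^ Suc n" for n
    by (auto simp: power_one_over)
  have u: "2 * real (Suc n) - 1 = 2 * real n + 1" for n by simp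
  have z: "2 * real (Suc n) + 1 = 2 * real n + 3" for n by simp
  have w: "real (Suc n) = real n + 1" for n by simp
  have u': "2 * (real n + 1) - 1 = 2 * real n + 1" for n :: nat by simp
  have z': "2 * (real n + 1) + 1 = 2 * real n + 3" for n :: nat by simp
  have nonneg: "0 \<le> 1 / (2 ^ (k + j) * (2 * real k - 1) * real k ^ i * (2 * real k + 1))" if "i > 0" for k j i
  proof (cases "k = 0")
    case False
    hence "2 * real k - 1 \<ge> 0" by simp
    thus ?thesis by simp
  qed (use that in \<open>simp add: zero_power\<close>)
  have nonneg1: "0 \<le> 1 / (2 ^ (k + 1) * (2 * real k - 1) * real k * (2 * real k + 1))" for k
    using nonneg[of 1 k 1] by simp
  have nonneg2: "0 \<le> 1 / (2 ^ (k + 2) * (2 * real k - 1) * real k ^ 2 * (2 * real k + 1))" for k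
    using nonneg[of 2 k 2] by simp
  have nonneg3: "0 \<le> 1 / (2 ^ (k + 3) * (2 * real k - 1) * real k ^ 3 * (2 * real k + 1))" for k
    using nonneg[of 3 k 3] by simp

  have eq1: "1 / (2 ^ (Suc n + 1) * (2 * real (Suc n) - 1) * real (Suc n) * (2 * real (Suc n) + 1))
     = 1/2 * (D n + E n - A n)" for n
  proof -
    have "1 / (2 ^ (Suc n + 1) * (2 * real (Suc n) - 1) * real (Suc n) * (2 * real (Suc n) + 1))
      = 1/2 * ((1/2)^(Suc n) / (2 * real (Suc n) - 1) + (1/2)^(Suc n) / (2 * real (Suc n) + 1) - (1/2)^(Suc n) / real (Suc n))"
      by (rule term1[where P = "2 ^ Suc n"]) (use facts in \<open>auto simp: power_add\<close>)
    thus ?thesis unfolding A_def D_def E_def by (simp only: w u' z')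
  qed
  have s1: "(\<lambda>n. 1/2 * (D n + E n - A n)) sums (1/2 * (L / sqrt 2 + (sqrt 2 * L - 1) - ln 2))"
    by (intro sums_mult sums_add sums_diff sD sE sA)
  have v1: "1/2 * (L / sqrt 2 + (sqrt 2 * L - 1) - ln 2) = 3 / (2 * sqrt 2) * L - 1 / 2 * (ln 2 + 1)"
    by (simp add: field_simps)
  have r1: "((\<lambda>k::nat. 1 / (2 ^ (k + 1) * (2 * real k - 1) * real k * (2 * real k + 1)))
            has_sum (3 / (2 * sqrt 2) * ln (1 + sqrt 2) - 1 / 2 * (ln 2 + 1))) {1..}"
  proof (rule finish_has_sum)
    show "(\<lambda>n. 1 / (2 ^ (Suc n + 1) * (2 * real (Suc n) - 1) * real (Suc n) * (2 * real (Suc n) + 1)))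
          sums (3 / (2 * sqrt 2) * ln (1 + sqrt 2) - 1 / 2 * (ln 2 + 1))"
      unfolding eq1 using s1[unfolded v1] unfolding L_def .
  qed (simp, rule nonneg1)

  have eq2: "1 / (2 ^ (Suc n + 2) * (2 * real (Suc n) - 1) * real (Suc n)^2 * (2 * real (Suc n) + 1))
     = 1/4 * (2 * D n - 2 * E n - B n)" for n
  proof -
    have "1 / (2 ^ (Suc n + 2) * (2 * real (Suc n) - 1) * real (Suc n)^2 * (2 * real (Suc n) + 1))
      = 1/4 * (2 * ((1/2)^(Suc n) / (2 * real (Suc n) - 1)) - 2 * ((1/2)^(Suc n) / (2 * real (Suc n) + 1)) - (1/2)^(Suc n) / real (Suc n)^2)"
      by (rule term2[where P = "2 ^ Suc n"]) (use facts in \<open>auto simp: power_add\<close>)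
    thus ?thesis unfolding B_def D_def E_def by (simp only: w u' z')
  qed
  have s2: "(\<lambda>n. 1/4 * (2 * D n - 2 * E n - B n)) sums (1/4 * (2 * (L / sqrt 2) - 2 * (sqrt 2 * L - 1) - Li2 (1/2)))"
    by (intro sums_mult sums_add sums_diff sD sE sB)
  have v2: "1/4 * (2 * (L / sqrt 2) - 2 * (sqrt 2 * L - 1) - Li2 (1/2)) = 1 / 2 + 1 / 8 * (ln 2) ^ 2 - pi ^ 2 / 48 - 1 / (2 * sqrt 2) * L"
    unfolding Li2_half by (simp add: field_simps)
  have r2: "((\<lambda>k::nat. 1 / (2 ^ (k + 2) * (2 * real k - 1) * real k ^ 2 * (2 * real k + 1)))
            has_sum (1 / 2 + 1 / 8 * (ln 2) ^ 2 - pi ^ 2 / 48 - 1 / (2 * sqrt 2) * ln (1 + sqrt 2))) {1..}"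
  proof (rule finish_has_sum)
    show "(\<lambda>n. 1 / (2 ^ (Suc n + 2) * (2 * real (Suc n) - 1) * real (Suc n)^2 * (2 * real (Suc n) + 1)))
          sums (1 / 2 + 1 / 8 * (ln 2) ^ 2 - pi ^ 2 / 48 - 1 / (2 * sqrt 2) * ln (1 + sqrt 2))"
      unfolding eq2 using s2[unfolded v2] unfolding L_def .
  qed (simp, rule nonneg2)

  have eq3: "1 / (2 ^ (Suc n + 3) * (2 * real (Suc n) - 1) * real (Suc n)^3 * (2 * real (Suc n) + 1))
     = 1/8 * (4 * D n + 4 * E n - 4 * A n - C n)" for n
  proof -
    have "1 / (2 ^ (Suc n + 3) * (2 * real (Suc n) - 1) * real (Suc n)^3 * (2 * real (Suc n) + 1))
      = 1/8 * (4 * ((1/2)^(Suc n) / (2 * real (Suc n) - 1)) + 4 * ((1/2)^(Suc n) / (2 * real (Suc n) + 1))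
               - 4 * ((1/2)^(Suc n) / real (Suc n)) - (1/2)^(Suc n) / real (Suc n)^3)"
      by (rule term3[where P = "2 ^ Suc n"]) (use facts in \<open>auto simp: power_add\<close>)
    thus ?thesis unfolding A_def C_def D_def E_def by (simp only: w u' z')
  qed
  have s3: "(\<lambda>n. 1/8 * (4 * D n + 4 * E n - 4 * A n - C n)) sums
            (1/8 * (4 * (L / sqrt 2) + 4 * (sqrt 2 * L - 1) - 4 * ln 2 - Li3 (1/2)))"
    by (intro sums_mult sums_add sums_diff sD sE sA sC)
  have v3: "1/8 * (4 * (L / sqrt 2) + 4 * (sqrt 2 * L - 1) - 4 * ln 2 - Li3 (1/2)) =
      3 / (2 * sqrt 2) * L + pi ^ 2 * ln 2 / 96 - 1 / 2 * (ln 2 + 1) - (ln 2) ^ 3 / 48 - 7 / 64 * zeta 3"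
    unfolding Li3_half by (simp add: field_simps)
  have r3: "((\<lambda>k::nat. 1 / (2 ^ (k + 3) * (2 * real k - 1) * real k ^ 3 * (2 * real k + 1)))
            has_sum (3 / (2 * sqrt 2) * ln (1 + sqrt 2) + pi ^ 2 * ln 2 / 96 - 1 / 2 * (ln 2 + 1)
                     - (ln 2) ^ 3 / 48 - 7 / 64 * zeta 3)) {1..}"
  proof (rule finish_has_sum)
    show "(\<lambda>n. 1 / (2 ^ (Suc n + 3) * (2 * real (Suc n) - 1) * real (Suc n)^3 * (2 * real (Suc n) + 1)))
          sums (3 / (2 * sqrt 2) * ln (1 + sqrt 2) + pi ^ 2 * ln 2 / 96 - 1 / 2 * (ln 2 + 1)
                     - (ln 2) ^ 3 / 48 - 7 / 64 * zeta 3)"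
      unfolding eq3 using s3[unfolded v3] unfolding L_def .
  qed (simp, rule nonneg3)
  show ?thesis using r1 r2 r3 by blast
qed

end
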